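(* The sum $\oplus$ and the trace operator $\mathrm{tr}$ of $\mathcal M_{\max\star}(\mathbb S^{\mathrm{m},\mathbb P}_r)$ are monotone with respect to the orders $\le_{\mathcal M}$ on its hom-sets.
   Context: Notation: $[k]=\{1,\dots,k\}$; $T(X)=X+\mathbb R\times X+\{\exists^*,\forall^*\}$; diagrammatic composition. $\mathbb S^{\mathrm{m},\mathbb P}_r$: objects natural numbers; arrows $f:m\to n$ are functions $[m]\to T([n])$ such that for all $i\ne j$, $f(i)\notin[n]$ or $f(j)\notin\{f(i)\}\cup\mathbb R\times\{f(i)\}$; hom-sets ordered pointwise by the least order on $T([n])$ with $(r_1,i)\le(r_2,i)$ if $r_1\ge r_2$, $\exists^*\le z$, $z\le\forall^*$. Operations: $(f;g)(i)=f(i)$ if $f(i)\in\{\exists^*,\forall^*\}$; $g(j)$ if $f(i)=j$; $g(j)$ if $f(i)=(r,j)$, $g(j)\in\{\exists^*,\forall^*\}$; $(r,k)$ if $f(i)=(r,j)$, $g(j)=k$; $(r+r',k)$ if $f(i)=(r,j)$, $g(j)=(r',k)$. $(f\oplus g)(i)=f(i)$ ($i\le m$), $(f\oplus g)(m+i)$ is $g(i)$ with its index $j$ (if any) shifted to $n+j$. Trace of $f:l+m\to l+n$ at $i\in[m]$: $v_0=l+i$; if $j=0$ or $v_j\in[l]$, $v_{j+1}=f(v_j)$; if $v_j=(r,k)$, $k\in[l]$, $v_{j+1}=f(k)$; otherwise stop. If finite $(v_0..v_K)$ with $S$ the sum of first components of $v_j\in\mathbb R\times[l+n]$ ($1\le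 j\le K$): $v_K$ if $v_K\in\{\exists^*,\forall^*\}$; $k$ if $v_K=l+k$ and $v_j\in[l]$ for $1\le j<K$; $(S,k)$ if $v_K=l+k$ and some earlier $v_j\in\mathbb R\times[l]$; $(S,k)$ if $v_K=(r,l+k)$. If infinite, with $w'_t$ the first components of the (infinitely many) entries in $\mathbb R\times[l]$: $\exists^*$ if $\liminf_N\frac1N\sum_{t\le N}w'_t\ge0$, else $\forall^*$. For a poset $X$, $\mathcal M(X)$ is the set of nonempty finite subsets of pairwise incomparable elements, ordered by $S\le_{\mathcal M}T$ iff every $x\in S$ has some $y\in T$ with $x\le y$; $S^{\circ}$ is the set of maximal elements of $S$. $\mathcal M_{\max\star}(\mathbb S^{\mathrm{m},\mathbb P}_r)$ has objects natural numbers and arrows $m\to n$ the elements of $\mathcal M(\mathbb S^{\mathrm{m},\mathbb P}_r(m,n))$, with $S;T=\{f;g\mid f\in S,g\in T\}^{\circ}$, $S\oplus T=\{f\oplus g\mid f\in S,g\in T\}^{\circ}$, $\mathrm{tr}^l_{m,n}(S)=\{\mathrm{tr}^l_{m,n}(f)\mid f\in S\}^{\circ}$. *)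

theory Defs
  imports Complex_Main "HOL-Library.Infinite_Set" "HOL-Library.Liminf_Limsup" "HOL-Library.Extended_Real"
begin

text \<open>Elements of T(X) = X + R x X + {exists*, forall*}, with X a set of naturals.\<close>
datatype tgt = Idx nat | W real nat | Ex | Fa

fun inT :: "nat \<Rightarrow> tgt \<Rightarrow> bool" where
  "inT n (Idx k) = (k \<in> {1..n})"
| "inT n (W r k) = (k \<in> {1..n})"
| "inT n Ex = True"
| "inT n Fa = True"

definition tle :: "tgt \<Rightarrow> tgt \<Rightarrow> bool" where
  "tle x y \<longleftrightarrow> x = y \<or> x = Ex \<or> y = Fa \<or>
     (\<exists>r1 r2 k. x = W r1 k \<and> y = W r2 k \<and> r1 \<ge> r2)"

text \<open>Arrows m -> n: functions [m] -> T([n]), represented as functions on nat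
  that are Ex outside [m] (extensional representation).\<close>
definition hom :: "nat \<Rightarrow> nat \<Rightarrow> (nat \<Rightarrow> tgt) set" where
  "hom m n = {f. (\<forall>i. i \<notin> {1..m} \<longrightarrow> f i = Ex)
      \<and> (\<forall>i\<in>{1..m}. inT n (f i))
      \<and> (\<forall>i\<in>{1..m}. \<forall>j\<in>{1..m}. i \<noteq> j \<longrightarrow>
           (\<forall>k. f i = Idx k \<longrightarrow> f j \<noteq> Idx k \<and> (\<forall>r. f j \<noteq> W r k)))}"

definition hle :: "(nat \<Rightarrow> tgt) \<Rightarrow> (nat \<Rightarrow> tgt) \<Rightarrow> bool" where
  "hle f g \<longleftrightarrow> (\<forall>i. tle (f i) (g i))"

fun shift :: "nat \<Rightarrow> tgt \<Rightarrow> tgt" where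
  "shift n (Idx j) = Idx (n + j)"
| "shift n (W r j) = W r (n + j)"
| "shift n Ex = Ex"
| "shift n Fa = Fa"

text \<open>Monoidal sum of f : m -> n and g : m' -> n' (m' is implicit via extensionality).\<close>
definition hsum :: "nat \<Rightarrow> nat \<Rightarrow> (nat \<Rightarrow> tgt) \<Rightarrow> (nat \<Rightarrow> tgt) \<Rightarrow> (nat \<Rightarrow> tgt)" where
  "hsum m n f g = (\<lambda>i. if i \<le> m then f i else shift n (g (i - m)))"

fun idx :: "tgt \<Rightarrow> nat" where
  "idx (Idx k) = k" | "idx (W r k) = k" | "idx Ex = 0" | "idx Fa = 0"

fun wt :: "tgt \<Rightarrow> real" where
  "wt (W r k) = r" | "wt (Idx k) = 0" | "wt Ex = 0" | "wt Fa = 0"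

fun isW :: "tgt \<Rightarrow> bool" where
  "isW (W r k) = True" | "isW (Idx k) = False" | "isW Ex = False" | "isW Fa = False"

fun isIdx :: "tgt \<Rightarrow> bool" where
  "isIdx (Idx k) = True" | "isIdx (W r k) = False" | "isIdx Ex = False" | "isIdx Fa = False"

definition cont :: "nat \<Rightarrow> tgt \<Rightarrow> bool" where
  "cont l x \<longleftrightarrow> (isIdx x \<or> isW x) \<and> idx x \<in> {1..l}"

text \<open>The sequence v_0 = l+i, v_(j+1) = f(index of v_j) (valid while the walk continues).\<close>
definition tseq :: "nat \<Rightarrow> (nat \<Rightarrow> tgt) \<Rightarrow> nat \<Rightarrow> nat \<Rightarrow> tgt" where
  "tseq l f i j = ((\<lambda>x. f (idx x)) ^^ j) (Idx (l + i))"

definition tr_at :: "nat \<Rightarrow> (nat \<Rightarrow> tgt) \<Rightarrow> nat \<Rightarrow> tgt" where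
  "tr_at l f i =
    (let v = tseq l f i in
     if \<exists>K. K \<ge> 1 \<and> \<not> cont l (v K) then
       (let K = (LEAST K. K \<ge> 1 \<and> \<not> cont l (v K));
            S = (\<Sum>j\<in>{1..K}. wt (v j)) in
        case v K of
          Ex \<Rightarrow> Ex
        | Fa \<Rightarrow> Fa
        | Idx k \<Rightarrow> (if \<forall>j\<in>{1..<K}. isIdx (v j) then Idx (k - l) else W S (k - l))
        | W r k \<Rightarrow> W S (k - l))
     else
       (let P = {j. j \<ge> 1 \<and> isW (v j)};
            w' = (\<lambda>t. wt (v (Infinite_Set.enumerate P (t - 1)))) in
        if liminf (\<lambda>N. ereal ((\<Sum>t\<in>{1..N}. w' t) / real N)) \<ge> 0 then Ex else Fa))"

definition htr :: "nat \<Rightarrow> nat \<Rightarrow> (nat \<Rightarrow> tgt) \<Rightarrow> (nat \<Rightarrow> tgt)" where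
  "htr l m f = (\<lambda>i. if i \<in> {1..m} then tr_at l f i else Ex)"

definition Mset :: "('a \<Rightarrow> 'a \<Rightarrow> bool) \<Rightarrow> 'a set \<Rightarrow> 'a set set" where
  "Mset le X = {S. S \<noteq> {} \<and> finite S \<and> S \<subseteq> X \<and>
      (\<forall>x\<in>S. \<forall>y\<in>S. x \<noteq> y \<longrightarrow> \<not> le x y \<and> \<not> le y x)}"

definition Mle :: "('a \<Rightarrow> 'a \<Rightarrow> bool) \<Rightarrow> 'a set \<Rightarrow> 'a set \<Rightarrow> bool" where
  "Mle le S T \<longleftrightarrow> (\<forall>x\<in>S. \<exists>y\<in>T. le x y)"

definition maxel :: "('a \<Rightarrow> 'a \<Rightarrow> bool) \<Rightarrow> 'a set \<Rightarrow> 'a set" where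
  "maxel le S = {x\<in>S. \<forall>y\<in>S. le x y \<longrightarrow> y = x}"

definition Msum :: "nat \<Rightarrow> nat \<Rightarrow> (nat \<Rightarrow> tgt) set \<Rightarrow> (nat \<Rightarrow> tgt) set \<Rightarrow> (nat \<Rightarrow> tgt) set" where
  "Msum m n S T = maxel hle ((\<lambda>(f, g). hsum m n f g) ` (S \<times> T))"

definition Mtr :: "nat \<Rightarrow> nat \<Rightarrow> (nat \<Rightarrow> tgt) set \<Rightarrow> (nat \<Rightarrow> tgt) set" where
  "Mtr l m S = maxel hle (htr l m ` S)"

end

theory Submission
  imports Defs
begin

lemma tle_refl: "tle x x" by (simp add: tle_def)

lemma tle_trans: "tle x y \<Longrightarrow> tle y z \<Longrightarrow> tle x z"
  unfolding tle_def by (cases x; cases y; cases z) auto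

lemma tle_antisym: "tle x y \<Longrightarrow> tle y x \<Longrightarrow> x = y"
  unfolding tle_def by (cases x; cases y) auto

lemma hle_refl: "hle f f" by (simp add: hle_def tle_refl)

lemma hle_trans: "hle f g \<Longrightarrow> hle g h \<Longrightarrow> hle f h"
  unfolding hle_def using tle_trans by blast

lemma hle_antisym: "hle f g \<Longrightarrow> hle g f \<Longrightarrow> f = g"
  unfolding hle_def using tle_antisym by blast

lemma exists_max:
  assumes "finite A" "a \<in> A"
  shows "\<exists>y\<in>maxel hle A. hle a y"
  using assms(2)
proof (induction "card {b\<in>A. hle a b}" arbitrary: a rule: less_induct)
  case less
  show ?case
  proof (cases "a \<in> maxel hle A")
    case True then show ?thesis using hle_refl by blast
  next
    case False
    then obtain b where b: "b \<in> A" "hle a b" "b \<noteq> a" using less.prems unfolding maxel_def by blast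
    have sub: "{c\<in>A. hle b c} \<subset> {c\<in>A. hle a c}"
    proof
      show "{c\<in>A. hle b c} \<subseteq> {c\<in>A. hle a c}" using b hle_trans by blast
      show "{c\<in>A. hle b c} \<noteq> {c\<in>A. hle a c}"
      proof
        assume "{c\<in>A. hle b c} = {c\<in>A. hle a c}"
        then have "hle b a" using less.prems hle_refl by blast
        then show False using b hle_antisym by blast
      qed
    qed
    have "card {c\<in>A. hle b c} < card {c\<in>A. hle a c}"
      using sub assms(1) by (simp add: psubset_card_mono)
    then obtain y where "y \<in> maxel hle A" "hle b y" using less.hyps b by blast
    then show ?thesis using b hle_trans by blast
  qed
qed

lemma Mle_maxel_image:
  assumes "finite B" "\<forall>x\<in>A. \<exists>y\<in>B. R x y" "\<forall>x y. R x y \<longrightarrow> hle (F x) (F y)"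
  shows "Mle hle (maxel hle (F ` A)) (maxel hle (F ` B))"
  unfolding Mle_def
proof
  fix z assume "z \<in> maxel hle (F ` A)"
  then obtain x where x: "x \<in> A" "z = F x" unfolding maxel_def by blast
  then obtain y where y: "y \<in> B" "R x y" using assms(2) by blast
  have "hle z (F y)" using x y assms(3) by blast
  moreover obtain w where "w \<in> maxel hle (F ` B)" "hle (F y) w"
    using exists_max[of "F ` B" "F y"] assms(1) y by blast
  ultimately show "\<exists>w\<in>maxel hle (F ` B). hle z w" using hle_trans by blast
qed

lemma tle_shift: "tle x y \<Longrightarrow> tle (shift n x) (shift n y)"
  unfolding tle_def by (cases x; cases y) auto

lemma hsum_mono: "hle f f' \<Longrightarrow> hle g g' \<Longrightarrow> hle (hsum m n f g) (hsum m n f' g')"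
  unfolding hle_def hsum_def using tle_shift by auto

definition shp :: "tgt \<Rightarrow> tgt \<Rightarrow> bool" where
  "shp x y \<longleftrightarrow> x = y \<or> (\<exists>r r' k. x = W r k \<and> y = W r' k \<and> r' \<le> r)"

lemma shp_props:
  assumes "shp x y"
  shows "idx x = idx y" "cont l x = cont l y" "isIdx x = isIdx y" "isW x = isW y" "wt y \<le> wt x"
  using assms unfolding shp_def cont_def by auto

lemma tle_not_shp: "tle x y \<Longrightarrow> \<not> shp x y \<Longrightarrow> x = Ex \<or> y = Fa"
  unfolding tle_def shp_def by auto

lemma tseq_0: "tseq l f i 0 = Idx (l + i)" by (simp add: tseq_def)
lemma tseq_Suc: "tseq l f i (Suc j) = f (idx (tseq l f i j))" by (simp add: tseq_def)

lemma tr_term: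
  assumes "K \<ge> 1" "\<not> cont l (tseq l f i K)" "\<forall>j\<in>{1..<K}. cont l (tseq l f i j)"
  shows "tr_at l f i = (case tseq l f i K of Ex \<Rightarrow> Ex | Fa \<Rightarrow> Fa
     | Idx k \<Rightarrow> (if \<forall>j\<in>{1..<K}. isIdx (tseq l f i j) then Idx (k - l)
                 else W (\<Sum>j\<in>{1..K}. wt (tseq l f i j)) (k - l))
     | W r k \<Rightarrow> W (\<Sum>j\<in>{1..K}. wt (tseq l f i j)) (k - l))"
proof -
  have L: "(LEAST K. K \<ge> 1 \<and> \<not> cont l (tseq l f i K)) = K"
  proof (rule Least_equality)
    show "1 \<le> K \<and> \<not> cont l (tseq l f i K)" using assms by simp
    fix y assume "1 \<le> y \<and> \<not> cont l (tseq l f i y)"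
    then show "K \<le> y" using assms(3) by (meson atLeastLessThan_iff not_le)
  qed
  show ?thesis unfolding tr_at_def Let_def L using assms(1,2) by auto
qed

lemma tr_inf:
  assumes "\<forall>K\<ge>1. cont l (tseq l f i K)"
  shows "tr_at l f i = (if liminf (\<lambda>N. ereal ((\<Sum>t\<in>{1..N}. wt (tseq l f i
     (Infinite_Set.enumerate {j. j \<ge> 1 \<and> isW (tseq l f i j)} (t - 1)))) / real N)) \<ge> 0 then Ex else Fa)"
  using assms unfolding tr_at_def Let_def by auto

lemma tr_mono:
  assumes fg: "hle f g"
  shows "tle (tr_at l f i) (tr_at l g i)"
proof -
  define v where "v = tseq l f i"
  define u where "u = tseq l g i"
  have step: "tle (v j) (u j)" if h: "\<forall>j'\<in>{1..<j}. shp (v j') (u j')" for j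
  proof (cases j)
    case 0 then show ?thesis by (simp add: v_def u_def tseq_0 tle_refl)
  next
    case (Suc p)
    have "idx (v p) = idx (u p)"
    proof (cases p)
      case 0 then show ?thesis by (simp add: v_def u_def tseq_0)
    next
      case (Suc q) then show ?thesis using h \<open>j = Suc p\<close> shp_props(1) by auto
    qed
    then show ?thesis using fg Suc by (simp add: v_def u_def tseq_Suc hle_def)
  qed
  show ?thesis
  proof (cases "\<exists>j. j \<ge> 1 \<and> (\<not> shp (v j) (u j) \<or> \<not> cont l (v j))")
    case True
    define d where "d = (LEAST j. j \<ge> 1 \<and> (\<not> shp (v j) (u j) \<or> \<not> cont l (v j)))"
    have d1: "d \<ge> 1" "\<not> shp (v d) (u d) \<or> \<not> cont l (v d)"
      using LeastI_ex[OF True] unfolding d_def by auto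
    have before: "\<forall>j\<in>{1..<d}. shp (v j) (u j) \<and> cont l (v j)"
    proof
      fix j assume "j \<in> {1..<d}"
      then have "j < d" "j \<ge> 1" by auto
      have "\<not> (j \<ge> 1 \<and> (\<not> shp (v j) (u j) \<or> \<not> cont l (v j)))"
        using \<open>j < d\<close> unfolding d_def by (rule not_less_Least)
      then show "shp (v j) (u j) \<and> cont l (v j)" using \<open>j \<ge> 1\<close> by blast
    qed
    have contu: "\<forall>j\<in>{1..<d}. cont l (u j)" using before shp_props(2) by blast
    have contv: "\<forall>j\<in>{1..<d}. cont l (v j)" using before by blast
    have tled: "tle (v d) (u d)" using step before by blast
    show ?thesis
    proof (cases "shp (v d) (u d)")
      case True
      then have ncv: "\<not> cont l (v d)" using d1 by blast
      then have ncu: "\<not> cont l (u d)" using True shp_props(2) by blast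
      have Tf: "tr_at l f i = (case v d of Ex \<Rightarrow> Ex | Fa \<Rightarrow> Fa
         | Idx k \<Rightarrow> (if \<forall>j\<in>{1..<d}. isIdx (v j) then Idx (k - l)
                     else W (\<Sum>j\<in>{1..d}. wt (v j)) (k - l))
         | W r k \<Rightarrow> W (\<Sum>j\<in>{1..d}. wt (v j)) (k - l))"
        using tr_term[of d l f i] d1 ncv contv unfolding v_def by blast
      have Tg: "tr_at l g i = (case u d of Ex \<Rightarrow> Ex | Fa \<Rightarrow> Fa
         | Idx k \<Rightarrow> (if \<forall>j\<in>{1..<d}. isIdx (u j) then Idx (k - l)
                     else W (\<Sum>j\<in>{1..d}. wt (u j)) (k - l))
         | W r k \<Rightarrow> W (\<Sum>j\<in>{1..d}. wt (u j)) (k - l))"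
        using tr_term[of d l g i] d1 ncu contu unfolding u_def by blast
      have shpall: "\<forall>j\<in>{1..d}. shp (v j) (u j)" using before True
        by (metis atLeastAtMost_iff atLeastLessThan_iff le_neq_implies_less)
      have sumle: "(\<Sum>j\<in>{1..d}. wt (u j)) \<le> (\<Sum>j\<in>{1..d}. wt (v j))"
        by (rule sum_mono) (use shpall shp_props(5) in blast)
      have idxeq: "(\<forall>j\<in>{1..<d}. isIdx (v j)) = (\<forall>j\<in>{1..<d}. isIdx (u j))"
        using before shp_props(3) by blast
      show ?thesis
      proof (cases "v d")
        case (Idx k)
        then have "u d = Idx k" using True unfolding shp_def by auto
        then show ?thesis using Tf Tg Idx idxeq sumle by (auto simp: tle_def)
      next
        case (W r k)
        then obtain r' where "u d = W r' k" using True unfolding shp_def by (metis tgt.inject(2))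
        then show ?thesis using Tf Tg W sumle by (auto simp: tle_def)
      next
        case Ex then show ?thesis using Tf by (simp add: tle_def)
      next
        case Fa
        then have "u d = Fa" using True unfolding shp_def by auto
        then show ?thesis using Tf Tg Fa by (simp add: tle_def)
      qed
    next
      case False
      then have "v d = Ex \<or> u d = Fa" using tled tle_not_shp by blast
      then show ?thesis
      proof
        assume "v d = Ex"
        then have "tr_at l f i = Ex"
          using tr_term[of d l f i] d1 contv unfolding v_def by (simp add: cont_def)
        then show ?thesis by (simp add: tle_def)
      next
        assume "u d = Fa"
        then have "tr_at l g i = Fa"
          using tr_term[of d l g i] d1 contu unfolding u_def by (simp add: cont_def)
        then show ?thesis by (simp add: tle_def)
      qed
    qed
  next
    case False
    then have all: "\<forall>j\<ge>1. shp (v j) (u j) \<and> cont l (v j)" by blast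
    have cv: "\<forall>K\<ge>1. cont l (tseq l f i K)" using all unfolding v_def by blast
    have cu: "\<forall>K\<ge>1. cont l (tseq l g i K)" using all shp_props(2) unfolding u_def v_def by blast
    define P where "P = {j. j \<ge> 1 \<and> isW (v j)}"
    have PQ: "{j. j \<ge> 1 \<and> isW (u j)} = P" using all shp_props(4) unfolding P_def by blast
    have P1: "\<forall>t. Infinite_Set.enumerate P t \<ge> 1 \<or> Infinite_Set.enumerate P t \<notin> P"
      unfolding P_def by blast
    define a where "a = (\<lambda>N::nat. ereal ((\<Sum>t\<in>{1..N}. wt (v (Infinite_Set.enumerate P (t - 1)))) / real N))"
    define b where "b = (\<lambda>N::nat. ereal ((\<Sum>t\<in>{1..N}. wt (u (Infinite_Set.enumerate P (t - 1)))) / real N))"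
    have wle: "wt (u x) \<le> wt (v x)" for x
    proof (cases "x \<ge> 1")
      case True then show ?thesis using all shp_props(5) by blast
    next
      case False then have "x = 0" by simp
      then show ?thesis by (simp add: u_def v_def tseq_0)
    qed
    have "b N \<le> a N" for N
      unfolding a_def b_def
      by (simp add: divide_right_mono sum_mono wle)
    then have lim: "liminf b \<le> liminf a" by (intro Liminf_mono) simp
    have Tf: "tr_at l f i = (if liminf a \<ge> 0 then Ex else Fa)"
      using tr_inf[OF cv] unfolding a_def P_def v_def by simp
    have Tg: "tr_at l g i = (if liminf b \<ge> 0 then Ex else Fa)"
      using tr_inf[OF cu] PQ unfolding b_def u_def by simp
    show ?thesis using Tf Tg lim by (auto simp: tle_def)
  qed
qed

lemma htr_mono: "hle f g \<Longrightarrow> hle (htr l m f) (htr l m g)"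
  unfolding hle_def htr_def using tr_mono[unfolded hle_def] by (auto simp: tle_refl)

theorem propositionD16:
  shows "(\<forall>m n m' n' S S' T T'.
            S \<in> Mset hle (hom m n) \<and> S' \<in> Mset hle (hom m n) \<and>
            T \<in> Mset hle (hom m' n') \<and> T' \<in> Mset hle (hom m' n') \<and>
            Mle hle S S' \<and> Mle hle T T' \<longrightarrow>
            Mle hle (Msum m n S T) (Msum m n S' T'))
       \<and> (\<forall>l m n S S'.
            S \<in> Mset hle (hom (l + m) (l + n)) \<and> S' \<in> Mset hle (hom (l + m) (l + n)) \<and>
            Mle hle S S' \<longrightarrow>
            Mle hle (Mtr l m S) (Mtr l m S'))"
proof (intro conjI allI impI)
  fix m n m' n' S S' T T'
  assume h: "S \<in> Mset hle (hom m n) \<and> S' \<in> Mset hle (hom m n) \<and>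
            T \<in> Mset hle (hom m' n') \<and> T' \<in> Mset hle (hom m' n') \<and>
            Mle hle S S' \<and> Mle hle T T'"
  have fin: "finite (S' \<times> T')" using h unfolding Mset_def by auto
  show "Mle hle (Msum m n S T) (Msum m n S' T')"
    unfolding Msum_def
    apply (rule Mle_maxel_image[where R="\<lambda>(f,g) (f',g'). hle f f' \<and> hle g g'"])
    using fin apply simp
    using h unfolding Mle_def apply auto[1]
    using hsum_mono by auto
next
  fix l m n S S'
  assume h: "S \<in> Mset hle (hom (l + m) (l + n)) \<and> S' \<in> Mset hle (hom (l + m) (l + n)) \<and>
            Mle hle S S'"
  show "Mle hle (Mtr l m S) (Mtr l m S')"
    unfolding Mtr_def
    apply (rule Mle_maxel_image[where R=hle])
    using h unfolding Mset_def Mle_def apply auto[2]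
    using htr_mono by blast
qed

end
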